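(* Let $\mathcal{S}=(U,\mathcal{P})$ be a relational schema with finite domain $U$, let $D=D^n\cup D^x$ be a database instance, let $\mathcal{Q}$ be a Boolean first-order query, and let $\tau$ be an endogenous tuple. (a) If $X_\tau$ occurs positively in $\Phi_{\mathcal{Q}}(D)$, then $\mathcal{E}^D_{\tau,\mathcal{Q}}=r_{\mathcal{Q},X_\tau}\cdot\frac{\sigma_{\mathcal{Q}}}{\sigma_{X_\tau}}$. (b) If $X_\tau$ occurs negatively in $\Phi_{\mathcal{Q}}(D)$, then $\mathcal{E}^D_{\tau,\mathcal{Q}}=-\,r_{\mathcal{Q},X_\tau}\cdot\frac{\sigma_{\mathcal{Q}}}{\sigma_{X_\tau}}$. Here $\mathcal{Q}$ and $X_\tau$ are regarded as Bernoulli random variables on the space $\Omega$ of truth assignments to $\mathit{Var}(\Phi_{\mathcal{Q}}(D))$ with the uniform distribution conditioned on the exogenous variables taking their fixed values (positive exogenous variables equal to $1$, negative ones equal to $0$), $\sigma_{\mathcal{Q}},\sigma_{X_\tau}$ are their standard deviations, and $r_{\mathcal{Q},X_\tau}$ is their Pearson correlation coefficient.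
   Context: A database instance is a finite set of ground atoms (tuples) partitioned as $D=D^n\cup D^x$ into endogenous and exogenous tuples. Lineage: for every potential tuple $\tau$ introduce a propositional variable $X_\tau$; $\Phi_{\mathcal{Q}}$ is defined inductively by $\Phi_\tau:=X_\tau$, $\Phi_{a=a}:=\mathit{true}$, $\Phi_{a=b}:=\mathit{false}$ for distinct constants, $\Phi_{\mathcal{Q}_1\wedge\mathcal{Q}_2}:=\Phi_{\mathcal{Q}_1}\wedge\Phi_{\mathcal{Q}_2}$, $\Phi_{\mathcal{Q}_1\vee\mathcal{Q}_2}:=\Phi_{\mathcal{Q}_1}\vee\Phi_{\mathcal{Q}_2}$, $\Phi_{\exists x\,\mathcal{Q}}:=\bigvee_{c\in U}\Phi_{\mathcal{Q}[c/x]}$, $\Phi_{\neg\mathcal{Q}}:=\neg\Phi_{\mathcal{Q}}$. With negation only in front of variables, the $D$-lineage $\Phi_{\mathcal{Q}}(D)$ is obtained by replacing each positive occurrence of $X_\tau$ with $\tau\notin D$ by $\mathit{false}$ and each literal $\neg X_\tau$ with $\tau\in D$ by $\mathit{false}$. Standing assumptions: no variable occurs both positively and negatively in $\Phi_{\mathcal{Q}}(D)$, and every $\tau\notin D$ occurring negatively is regarded as endogenous. Exogenous variables (of tuples in $D^x$) split into positive ones $\mathit{Var}^{x,+}$ and negative ones $\mathit{Var}^{x,-}$. $\Omega$ is the set of all assignments $\sigma:\mathit{Var}(\Phi_{\mathcal{Q}}(D))\to\{0,1\}$ with uniform distribution; $\mathcal{Q}(\sigma)=1$ iff $\sigma\models\Phi_{\mathcal{Q}}(D)$,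 and $X_\tau(\sigma)=\sigma(X_\tau)$; $\mathit{do}(X=x):=\{\sigma:\sigma(X)=x\}$. For endogenous $\tau$, $E(\mathcal{Q}\mid\mathit{do}(X_\tau=v))$ is the conditional expectation of $\mathcal{Q}$ given $\mathit{do}(X_\tau=v)$ intersected with $\mathit{do}(X_{\tau'}=1)$ for all $X_{\tau'}\in\mathit{Var}^{x,+}$ and $\mathit{do}(X_{\tau'}=0)$ for all $X_{\tau'}\in\mathit{Var}^{x,-}$. The causal effect is $\mathcal{E}^D_{\tau,\mathcal{Q}}:=E(\mathcal{Q}\mid\mathit{do}(X_\tau=v))-E(\mathcal{Q}\mid\mathit{do}(X_\tau=1-v))$ with $v=1$ if $\tau\in D$ and $v=0$ otherwise. The Pearson correlation coefficient is $r_{X,Y}=\mathrm{Cov}(X,Y)/(\sigma_X\sigma_Y)$. *)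

theory Defs
  imports "HOL-Probability.Probability"
begin

type_synonym ('r,'c) tuple = "'r \<times> 'c list"

text \<open>A relational schema S = (U, P): a finite domain U of constants and relation names with
  arities (relation names not in P have arity None).\<close>
record ('r,'c) schema =
  dom :: "'c set"
  arity :: "'r \<Rightarrow> nat option"

definition wf_schema :: "('r,'c) schema \<Rightarrow> bool" where
  "wf_schema S \<longleftrightarrow> finite (dom S)"

definition wf_tuple :: "('r,'c) schema \<Rightarrow> ('r,'c) tuple \<Rightarrow> bool" where
  "wf_tuple S t \<longleftrightarrow> arity S (fst t) = Some (length (snd t)) \<and> set (snd t) \<subseteq> dom S"

definition wf_instance :: "('r,'c) schema \<Rightarrow> ('r,'c) tuple set \<Rightarrow> ('r,'c) tuple set \<Rightarrow> bool" where
  "wf_instance S Dn Dx \<longleftrightarrow> finite Dn \<and> finite Dx \<and> Dn \<inter> Dx = {} \<and>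
     (\<forall>t \<in> Dn \<union> Dx. wf_tuple S t)"

datatype ('v,'c) fterm = TVar 'v | TConst 'c

datatype ('r,'v,'c) fo =
    Atom 'r "('v,'c) fterm list"
  | Eq "('v,'c) fterm" "('v,'c) fterm"
  | Conj "('r,'v,'c) fo" "('r,'v,'c) fo"
  | Disj "('r,'v,'c) fo" "('r,'v,'c) fo"
  | Exists 'v "('r,'v,'c) fo"
  | Neg "('r,'v,'c) fo"

fun fv_term :: "('v,'c) fterm \<Rightarrow> 'v set" where
  "fv_term (TVar x) = {x}"
| "fv_term (TConst c) = {}"

fun fv :: "('r,'v,'c) fo \<Rightarrow> 'v set" where
  "fv (Atom R ts) = (\<Union>t\<in>set ts. fv_term t)"
| "fv (Eq s t) = fv_term s \<union> fv_term t"
| "fv (Conj a b) = fv a \<union> fv b"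
| "fv (Disj a b) = fv a \<union> fv b"
| "fv (Exists x a) = fv a - {x}"
| "fv (Neg a) = fv a"

fun consts_term :: "('v,'c) fterm \<Rightarrow> 'c set" where
  "consts_term (TVar x) = {}"
| "consts_term (TConst c) = {c}"

fun wf_query :: "('r,'c) schema \<Rightarrow> ('r,'v,'c) fo \<Rightarrow> bool" where
  "wf_query S (Atom R ts) \<longleftrightarrow> arity S R = Some (length ts) \<and> (\<Union>t\<in>set ts. consts_term t) \<subseteq> dom S"
| "wf_query S (Eq s t) \<longleftrightarrow> consts_term s \<union> consts_term t \<subseteq> dom S"
| "wf_query S (Conj a b) \<longleftrightarrow> wf_query S a \<and> wf_query S b"
| "wf_query S (Disj a b) \<longleftrightarrow> wf_query S a \<and> wf_query S b"
| "wf_query S (Exists x a) \<longleftrightarrow> wf_query S a"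
| "wf_query S (Neg a) \<longleftrightarrow> wf_query S a"

definition boolean_query :: "('r,'c) schema \<Rightarrow> ('r,'v,'c) fo \<Rightarrow> bool" where
  "boolean_query S Q \<longleftrightarrow> wf_query S Q \<and> fv Q = {}"

datatype 'x pform =
    PTrue | PFalse
  | PLit bool 'x       \<comment> \<open>\<open>PLit True x\<close> = X, \<open>PLit False x\<close> = \<not>X\<close>
  | PAnd "'x pform list"
  | POr "'x pform list"

fun psat :: "('x \<Rightarrow> bool) \<Rightarrow> 'x pform \<Rightarrow> bool" where
  "psat \<sigma> PTrue = True"
| "psat \<sigma> PFalse = False"
| "psat \<sigma> (PLit b x) = (if b then \<sigma> x else \<not> \<sigma> x)"
| "psat \<sigma> (PAnd fs) = (\<forall>f\<in>set fs. psat \<sigma> f)"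
| "psat \<sigma> (POr fs) = (\<exists>f\<in>set fs. psat \<sigma> f)"

fun pos_vars :: "'x pform \<Rightarrow> 'x set" and neg_vars :: "'x pform \<Rightarrow> 'x set" where
  "pos_vars PTrue = {}" | "pos_vars PFalse = {}"
| "pos_vars (PLit b x) = (if b then {x} else {})"
| "pos_vars (PAnd fs) = (\<Union>f\<in>set fs. pos_vars f)"
| "pos_vars (POr fs) = (\<Union>f\<in>set fs. pos_vars f)"
| "neg_vars PTrue = {}" | "neg_vars PFalse = {}"
| "neg_vars (PLit b x) = (if b then {} else {x})"
| "neg_vars (PAnd fs) = (\<Union>f\<in>set fs. neg_vars f)"
| "neg_vars (POr fs) = (\<Union>f\<in>set fs. neg_vars f)"

definition pvars :: "'x pform \<Rightarrow> 'x set" where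
  "pvars f = pos_vars f \<union> neg_vars f"

fun eval_term :: "('v \<Rightarrow> 'c) \<Rightarrow> ('v,'c) fterm \<Rightarrow> 'c" where
  "eval_term env (TVar x) = env x"
| "eval_term env (TConst c) = c"

text \<open>\<open>lin U p Q env\<close> is the lineage \<open>\<Phi>_Q\<close> of \<open>Q\<close> (with its free variables instantiated by
  \<open>env\<close>, i.e. \<open>Q[env]\<close>) if \<open>p\<close>, and of \<open>\<not>Q\<close> if \<not>p, with negations pushed in front of the
  variables by De Morgan's laws. \<open>\<exists>x\<close> becomes the disjunction over all \<open>c \<in> U\<close>
  (enumerated in sorted order).\<close>
fun lin :: "'c::linorder set \<Rightarrow> bool \<Rightarrow> ('r,'v,'c) fo \<Rightarrow> ('v \<Rightarrow> 'c) \<Rightarrow> ('r,'c) tuple pform" where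
  "lin U p (Atom R ts) env = PLit p (R, map (eval_term env) ts)"
| "lin U p (Eq s t) env =
     (if (eval_term env s = eval_term env t) = p then PTrue else PFalse)"
| "lin U p (Conj a b) env =
     (if p then PAnd [lin U p a env, lin U p b env] else POr [lin U p a env, lin U p b env])"
| "lin U p (Disj a b) env =
     (if p then POr [lin U p a env, lin U p b env] else PAnd [lin U p a env, lin U p b env])"
| "lin U p (Exists x a) env =
     (if p then POr (map (\<lambda>c. lin U p a (env(x := c))) (sorted_list_of_set U))
      else PAnd (map (\<lambda>c. lin U p a (env(x := c))) (sorted_list_of_set U)))"
| "lin U p (Neg a) env = lin U (\<not> p) a env"

text \<open>Lineage of a Boolean query (the environment is irrelevant for sentences).\<close>
definition lineage :: "('r,'c::linorder) schema \<Rightarrow> ('r,'v,'c) fo \<Rightarrow> ('r,'c) tuple pform" where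
  "lineage S Q = lin (dom S) True Q (\<lambda>_. undefined)"

fun dlin :: "'x set \<Rightarrow> 'x pform \<Rightarrow> 'x pform" where
  "dlin D PTrue = PTrue"
| "dlin D PFalse = PFalse"
| "dlin D (PLit b x) = (if b \<and> x \<notin> D then PFalse else if \<not> b \<and> x \<in> D then PFalse else PLit b x)"
| "dlin D (PAnd fs) = PAnd (map (dlin D) fs)"
| "dlin D (POr fs) = POr (map (dlin D) fs)"

definition D_lineage :: "('r,'c::linorder) schema \<Rightarrow> ('r,'c) tuple set \<Rightarrow> ('r,'v,'c) fo \<Rightarrow> ('r,'c) tuple pform" where
  "D_lineage S D Q = dlin D (lineage S Q)"

text \<open>\<open>\<Omega>\<close>: all assignments to the variables of \<open>\<Phi>\<close> (identified with functions that are
  False outside \<open>pvars \<Phi>\<close>).\<close>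
definition Omega :: "'x pform \<Rightarrow> ('x \<Rightarrow> bool) set" where
  "Omega \<Phi> = {\<sigma>. \<forall>x. x \<notin> pvars \<Phi> \<longrightarrow> \<sigma> x = False}"

definition exo_pos :: "'x set \<Rightarrow> 'x pform \<Rightarrow> 'x set" where
  "exo_pos Dx \<Phi> = pos_vars \<Phi> \<inter> Dx"

definition exo_neg :: "'x set \<Rightarrow> 'x pform \<Rightarrow> 'x set" where
  "exo_neg Dx \<Phi> = neg_vars \<Phi> \<inter> Dx"

definition Omega_x :: "'x set \<Rightarrow> 'x pform \<Rightarrow> ('x \<Rightarrow> bool) set" where
  "Omega_x Dx \<Phi> = {\<sigma> \<in> Omega \<Phi>. (\<forall>x \<in> exo_pos Dx \<Phi>. \<sigma> x) \<and> (\<forall>x \<in> exo_neg Dx \<Phi>. \<not> \<sigma> x)}"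

definition do_set :: "'x \<Rightarrow> bool \<Rightarrow> ('x \<Rightarrow> bool) set" where
  "do_set X v = {\<sigma>. \<sigma> X = v}"

definition rv_Q :: "'x pform \<Rightarrow> ('x \<Rightarrow> bool) \<Rightarrow> real" where
  "rv_Q \<Phi> \<sigma> = of_bool (psat \<sigma> \<Phi>)"

definition rv_X :: "'x \<Rightarrow> ('x \<Rightarrow> bool) \<Rightarrow> real" where
  "rv_X X \<sigma> = of_bool (\<sigma> X)"

text \<open>\<open>E(Q | do(X_\<tau> = v))\<close>, with the exogenous variables fixed as well (uniform distribution).\<close>
definition E_do :: "'x set \<Rightarrow> 'x pform \<Rightarrow> 'x \<Rightarrow> bool \<Rightarrow> real" where
  "E_do Dx \<Phi> X v = measure_pmf.expectation (pmf_of_set (Omega_x Dx \<Phi> \<inter> do_set X v)) (rv_Q \<Phi>)"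

definition causal_effect ::
  "('r,'c::linorder) schema \<Rightarrow> ('r,'c) tuple set \<Rightarrow> ('r,'c) tuple set \<Rightarrow> ('r,'c) tuple \<Rightarrow> ('r,'v,'c) fo \<Rightarrow> real" where
  "causal_effect S Dn Dx \<tau> Q =
     (let \<Phi> = D_lineage S (Dn \<union> Dx) Q; v = (\<tau> \<in> Dn \<union> Dx)
      in E_do Dx \<Phi> \<tau> v - E_do Dx \<Phi> \<tau> (\<not> v))"

definition P_x :: "'x set \<Rightarrow> 'x pform \<Rightarrow> ('x \<Rightarrow> bool) pmf" where
  "P_x Dx \<Phi> = pmf_of_set (Omega_x Dx \<Phi>)"

definition covariance :: "'a pmf \<Rightarrow> ('a \<Rightarrow> real) \<Rightarrow> ('a \<Rightarrow> real) \<Rightarrow> real" where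
  "covariance P f g = measure_pmf.expectation P (\<lambda>\<omega>. (f \<omega> - measure_pmf.expectation P f) * (g \<omega> - measure_pmf.expectation P g))"

definition std_dev :: "'a pmf \<Rightarrow> ('a \<Rightarrow> real) \<Rightarrow> real" where
  "std_dev P f = sqrt (measure_pmf.variance P f)"

definition pearson :: "'a pmf \<Rightarrow> ('a \<Rightarrow> real) \<Rightarrow> ('a \<Rightarrow> real) \<Rightarrow> real" where
  "pearson P f g = covariance P f g / (std_dev P f * std_dev P g)"

end

theory Submission
  imports Defs
begin

lemma alg_h1: fixes s1 s0 n1 n0 :: real assumes "n1 + n0 > 0"
  shows "s1 - n1 * ((s1 + s0) / (n1 + n0)) = (s1 * n0 - n1 * s0) / (n1 + n0)"
  using assms by (simp add: field_simps)
lemma alg_h2: fixes s1 s0 n1 n0 :: real assumes "n1 + n0 > 0"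
  shows "s0 - n0 * ((s1 + s0) / (n1 + n0)) = - ((s1 * n0 - n1 * s0) / (n1 + n0))"
  using assms by (simp add: field_simps)
lemma alg_h3: fixes n1 n0 :: real assumes "n1 + n0 > 0"
  shows "1 - n1 / (n1 + n0) = n0 / (n1 + n0)"
  using assms by (simp add: field_simps)
lemma alg_num: fixes K N n1 n0 :: real assumes "N > 0" "N = n1 + n0"
  shows "K / N * (n0 / N) - - (K / N) * (n1 / N) = K / N"
proof -
  have "K / N * (n0 / N) - - (K / N) * (n1 / N) = K / N * ((n0 + n1) / N)" by (simp add: algebra_simps add_divide_distrib)
  also have "(n0 + n1) / N = 1" using assms by simp
  finally show ?thesis by simp
qed
lemma alg_den: fixes N n1 n0 :: real assumes "N > 0" "N = n1 + n0"
  shows "n1 * (n0 / N)^2 + n0 * (n1 / N)^2 = n1 * n0 / N"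
proof -
  have "n1 * (n0 / N)^2 + n0 * (n1 / N)^2 = n1 * n0 * (n0 + n1) / N / N" by (simp add: power2_eq_square algebra_simps add_divide_distrib)
  also have "... = n1 * n0 * N / N / N" using assms by (simp add: add.commute)
  also have "... = n1 * n0 / N" using assms by simp
  finally show ?thesis .
qed
lemma alg_fin: fixes K N n1 n0 s1 s0 :: real assumes "N > 0" "n1 > 0" "n0 > 0" "K = s1 * n0 - n1 * s0"
  shows "K / N / N / (n1 * n0 / N / N) = s1 / n1 - s0 / n0"
  using assms by (simp add: field_simps)
lemma key:
  fixes A :: "'a set" and f :: "'a \<Rightarrow> real" and g :: "'a \<Rightarrow> bool"
  defines "A1 \<equiv> {x\<in>A. g x}" and "A0 \<equiv> {x\<in>A. \<not> g x}"
  assumes fin: "finite A" and ne1: "A1 \<noteq> {}" and ne0: "A0 \<noteq> {}"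
  shows "pearson (pmf_of_set A) f (\<lambda>x. of_bool (g x)) *
          (std_dev (pmf_of_set A) f / std_dev (pmf_of_set A) (\<lambda>x. of_bool (g x)))
        = sum f A1 / card A1 - sum f A0 / card A0"
proof -
  let ?X = "\<lambda>x. of_bool (g x) :: real"
  have Ane: "A \<noteq> {}" using ne1 A1_def by auto
  have E: "\<And>h. measure_pmf.expectation (pmf_of_set A) h = sum h A / card A"
    by (rule integral_pmf_of_set[OF Ane fin])
  have f1: "finite A1" "finite A0" using fin A1_def A0_def by auto
  have un: "A = A1 \<union> A0" "A1 \<inter> A0 = {}" using A1_def A0_def by auto
  have split: "\<And>h. sum h A = sum h A1 + sum h A0"
    using un f1 by (metis sum.union_disjoint)
  define n1 where "n1 = real (card A1)"
  define n0 where "n0 = real (card A0)"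
  define s1 where "s1 = sum f A1"
  define s0 where "s0 = sum f A0"
  have "card A1 > 0" using ne1 f1(1) by (simp add: card_gt_0_iff)
  hence n1p: "n1 > 0" unfolding n1_def by simp
  have "card A0 > 0" using ne0 f1(2) by (simp add: card_gt_0_iff)
  hence n0p: "n0 > 0" unfolding n0_def by simp
  have "card A = card A1 + card A0" using card_Un_disjoint[OF f1 un(2)] un(1) by simp
  hence cardA: "real (card A) = n1 + n0" unfolding n1_def n0_def by simp
  have sumc: "\<And>c. sum (\<lambda>_. c) A1 = n1 * c" "\<And>c. sum (\<lambda>_. c) A0 = n0 * c"
    using n1_def n0_def by auto
  have X1: "\<And>x. x \<in> A1 \<Longrightarrow> ?X x = 1" and X0: "\<And>x. x \<in> A0 \<Longrightarrow> ?X x = 0"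
    using A1_def A0_def by auto
  have EQ: "measure_pmf.expectation (pmf_of_set A) f = (s1 + s0) / (n1 + n0)"
    unfolding E split[of f] cardA s1_def s0_def by simp
  have EX: "measure_pmf.expectation (pmf_of_set A) ?X = n1 / (n1 + n0)"
  proof -
    have "sum ?X A1 = n1" using X1 sumc(1)[of 1] by (simp cong: sum.cong)
    moreover have "sum ?X A0 = 0" using X0 by simp
    ultimately show ?thesis unfolding E split[of ?X] cardA by simp
  qed
  define eq where "eq = (s1 + s0) / (n1 + n0)"
  define ex where "ex = n1 / (n1 + n0)"
  have cov: "covariance (pmf_of_set A) f ?X
     = ((s1 - n1 * eq) * (1 - ex) - (s0 - n0 * eq) * ex) / (n1 + n0)"
  proof -
    have "sum (\<lambda>x. (f x - eq) * (?X x - ex)) A1 = sum (\<lambda>x. (f x - eq) * (1 - ex)) A1"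
      by (rule sum.cong) (simp_all add: X1)
    also have "... = sum (\<lambda>x. f x - eq) A1 * (1 - ex)" by (rule sum_distrib_right[symmetric])
    also have "sum (\<lambda>x. f x - eq) A1 = s1 - n1 * eq" unfolding sum_subtractf s1_def sumc(1) ..
    finally have a: "sum (\<lambda>x. (f x - eq) * (?X x - ex)) A1 = (s1 - n1 * eq) * (1 - ex)" .
    have "sum (\<lambda>x. (f x - eq) * (?X x - ex)) A0 = sum (\<lambda>x. (f x - eq) * (- ex)) A0"
      by (rule sum.cong) (simp_all add: X0)
    also have "... = sum (\<lambda>x. f x - eq) A0 * (- ex)" by (rule sum_distrib_right[symmetric])
    also have "sum (\<lambda>x. f x - eq) A0 = s0 - n0 * eq" unfolding sum_subtractf s0_def sumc(2) ..
    finally have b: "sum (\<lambda>x. (f x - eq) * (?X x - ex)) A0 = - ((s0 - n0 * eq) * ex)" by simp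
    have c0: "covariance (pmf_of_set A) f ?X = measure_pmf.expectation (pmf_of_set A) (\<lambda>x. (f x - eq) * (?X x - ex))"
      unfolding covariance_def EQ EX eq_def[symmetric] ex_def[symmetric] ..
    show ?thesis unfolding c0 unfolding E split[of "\<lambda>x. (f x - eq) * (?X x - ex)"] a b cardA by simp
  qed
  have varX: "measure_pmf.variance (pmf_of_set A) ?X = (n1 * (1 - ex)^2 + n0 * ex^2) / (n1 + n0)"
  proof -
    have "sum (\<lambda>x. (?X x - ex)^2) A1 = sum (\<lambda>_. (1 - ex)^2) A1"
      by (rule sum.cong) (simp_all add: X1)
    also have "... = n1 * (1 - ex)^2" by (rule sumc(1))
    finally have a: "sum (\<lambda>x. (?X x - ex)^2) A1 = n1 * (1 - ex)^2" .
    have "sum (\<lambda>x. (?X x - ex)^2) A0 = sum (\<lambda>_. ex^2) A0"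
      by (rule sum.cong) (simp_all add: X0)
    also have "... = n0 * ex^2" by (rule sumc(2))
    finally have b: "sum (\<lambda>x. (?X x - ex)^2) A0 = n0 * ex^2" .
    have c0: "measure_pmf.variance (pmf_of_set A) ?X = measure_pmf.expectation (pmf_of_set A) (\<lambda>x. (?X x - ex)^2)"
      unfolding EX ex_def[symmetric] ..
    show ?thesis unfolding c0 unfolding E split[of "\<lambda>x. (?X x - ex)^2"] a b cardA by simp
  qed
  have VXpos: "measure_pmf.variance (pmf_of_set A) ?X > 0"
    unfolding varX ex_def using n1p n0p by (intro divide_pos_pos add_pos_pos) (auto simp: field_simps)
  have alg: "((s1 - n1 * eq) * (1 - ex) - (s0 - n0 * eq) * ex) / (n1 + n0)
        / ((n1 * (1 - ex)^2 + n0 * ex^2) / (n1 + n0)) = s1 / n1 - s0 / n0"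
  proof -
    define N where "N = n1 + n0"
    define K where "K = s1 * n0 - n1 * s0"
    have Np: "N > 0" using n1p n0p N_def by simp
    have "s1 - n1 * eq = K / N" unfolding eq_def K_def N_def using alg_h1 Np N_def by simp
    moreover have "s0 - n0 * eq = - (K / N)" unfolding eq_def K_def N_def using alg_h2 Np N_def by simp
    moreover have "1 - ex = n0 / N" unfolding ex_def N_def using alg_h3 Np N_def by simp
    moreover have "ex = n1 / N" unfolding ex_def N_def by simp
    ultimately have num: "(s1 - n1 * eq) * (1 - ex) - (s0 - n0 * eq) * ex = K / N"
      and den: "n1 * (1 - ex)^2 + n0 * ex^2 = n1 * n0 / N"
      using alg_num[OF Np N_def] alg_den[OF Np N_def] by simp_all
    have "((s1 - n1 * eq) * (1 - ex) - (s0 - n0 * eq) * ex) / (n1 + n0)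
        / ((n1 * (1 - ex)^2 + n0 * ex^2) / (n1 + n0)) = K / N / N / (n1 * n0 / N / N)"
      unfolding num den N_def by simp
    also have "... = s1 / n1 - s0 / n0" by (rule alg_fin[OF Np n1p n0p K_def])
    finally show ?thesis .
  qed
  have lhs: "pearson (pmf_of_set A) f ?X * (std_dev (pmf_of_set A) f / std_dev (pmf_of_set A) ?X)
        = covariance (pmf_of_set A) f ?X / measure_pmf.variance (pmf_of_set A) ?X"
  proof (cases "std_dev (pmf_of_set A) f = 0")
    case True
    have "measure_pmf.variance (pmf_of_set A) f = 0"
      using True unfolding std_dev_def by simp
    hence "sum (\<lambda>x. (f x - eq)^2) A = 0" using E EQ eq_def cardA n1p n0p by simp
    hence z: "\<And>x. x \<in> A \<Longrightarrow> f x - eq = 0"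
      using fin by (subst (asm) sum_nonneg_eq_0_iff) auto
    have "covariance (pmf_of_set A) f ?X = 0"
      unfolding covariance_def E EQ eq_def[symmetric] using z by simp
    thus ?thesis using True by (simp add: pearson_def)
  next
    case False
    have sx: "std_dev (pmf_of_set A) ?X * std_dev (pmf_of_set A) ?X = measure_pmf.variance (pmf_of_set A) ?X"
      unfolding std_dev_def using VXpos by simp
    have sxp: "std_dev (pmf_of_set A) ?X \<noteq> 0" using sx VXpos by auto
    show ?thesis unfolding pearson_def using False sxp sx[symmetric] by (simp add: field_simps)
  qed
  show ?thesis using lhs cov varX alg s1_def s0_def n1_def n0_def by simp
qed


lemma dlin_vars: "pos_vars (dlin D f) \<subseteq> D \<and> neg_vars (dlin D f) \<inter> D = {}"
  by (induction f) auto

lemma finite_vars: "finite (pos_vars f) \<and> finite (neg_vars f)"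
  by (induction f) auto

lemma finite_Omega_x: "finite (Omega_x Dx \<Phi>)"
proof -
  have "finite (pvars \<Phi>)" using finite_vars unfolding pvars_def by auto
  hence "finite {\<sigma>::'a\<Rightarrow>bool. \<forall>x. (x \<in> pvars \<Phi> \<longrightarrow> \<sigma> x \<in> UNIV) \<and> (x \<notin> pvars \<Phi> \<longrightarrow> \<sigma> x = False)}"
    by (intro finite_set_of_finite_funs) auto
  moreover have "Omega_x Dx \<Phi> \<subseteq> {\<sigma>. \<forall>x. (x \<in> pvars \<Phi> \<longrightarrow> \<sigma> x \<in> UNIV) \<and> (x \<notin> pvars \<Phi> \<longrightarrow> \<sigma> x = False)}"
    unfolding Omega_x_def Omega_def by auto
  ultimately show ?thesis by (rule finite_subset[rotated])
qed

lemma main_aux: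
  assumes endo: "\<tau> \<notin> Dx" and tv: "\<tau> \<in> pvars \<Phi>" and nm: "pos_vars \<Phi> \<inter> neg_vars \<Phi> = {}"
  shows "pearson (P_x Dx \<Phi>) (rv_Q \<Phi>) (rv_X \<tau>) * (std_dev (P_x Dx \<Phi>) (rv_Q \<Phi>) / std_dev (P_x Dx \<Phi>) (rv_X \<tau>))
     = E_do Dx \<Phi> \<tau> True - E_do Dx \<Phi> \<tau> False"
proof -
  let ?A = "Omega_x Dx \<Phi>"
  define \<sigma>0 where "\<sigma>0 = (\<lambda>x. x \<in> exo_pos Dx \<Phi>)"
  have in1: "\<sigma>0(\<tau> := True) \<in> ?A" and in0: "\<sigma>0(\<tau> := False) \<in> ?A"
    using endo tv nm unfolding \<sigma>0_def Omega_x_def Omega_def exo_pos_def exo_neg_def pvars_def by auto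
  have A1: "?A \<inter> do_set \<tau> True = {x\<in>?A. x \<tau>}" and A0: "?A \<inter> do_set \<tau> False = {x\<in>?A. \<not> x \<tau>}"
    unfolding do_set_def by auto
  have ne1: "{x\<in>?A. x \<tau>} \<noteq> {}" using in1 by (auto intro!: exI[of _ "\<sigma>0(\<tau> := True)"])
  have ne0: "{x\<in>?A. \<not> x \<tau>} \<noteq> {}" using in0 by (auto intro!: exI[of _ "\<sigma>0(\<tau> := False)"])
  have fin: "finite ?A" by (rule finite_Omega_x)
  have e1: "E_do Dx \<Phi> \<tau> True = sum (rv_Q \<Phi>) {x\<in>?A. x \<tau>} / card {x\<in>?A. x \<tau>}"
    unfolding E_do_def A1 by (rule integral_pmf_of_set[OF ne1]) (use fin in auto)
  have e0: "E_do Dx \<Phi> \<tau> False = sum (rv_Q \<Phi>) {x\<in>?A. \<not> x \<tau>} / card {x\<in>?A. \<not> x \<tau>}"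
    unfolding E_do_def A0 by (rule integral_pmf_of_set[OF ne0]) (use fin in auto)
  have rx: "rv_X \<tau> = (\<lambda>x. of_bool (x \<tau>))" by (auto simp: rv_X_def)
  show ?thesis unfolding e1 e0 rx P_x_def
    by (rule key[OF fin ne1 ne0])
qed

theorem proposition3:
  fixes S :: "('r, 'c::linorder) schema"
    and Dn Dx :: "('r,'c) tuple set"
    and Q :: "('r,'v,'c) fo"
    and \<tau> :: "('r,'c) tuple"
  defines "\<Phi> \<equiv> D_lineage S (Dn \<union> Dx) Q"
  defines "P \<equiv> P_x Dx \<Phi>"
  assumes schema: "wf_schema S"
    and inst: "wf_instance S Dn Dx"
    and query: "boolean_query S Q"
    and endo: "\<tau> \<notin> Dx"
    and no_mixed: "pos_vars \<Phi> \<inter> neg_vars \<Phi> = {}"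
  shows "(\<tau> \<in> pos_vars \<Phi> \<longrightarrow>
            causal_effect S Dn Dx \<tau> Q
              = pearson P (rv_Q \<Phi>) (rv_X \<tau>) * (std_dev P (rv_Q \<Phi>) / std_dev P (rv_X \<tau>)))
       \<and> (\<tau> \<in> neg_vars \<Phi> \<longrightarrow>
            causal_effect S Dn Dx \<tau> Q
              = - (pearson P (rv_Q \<Phi>) (rv_X \<tau>) * (std_dev P (rv_Q \<Phi>) / std_dev P (rv_X \<tau>))))"
proof -
  have dv0: "pos_vars \<Phi> \<subseteq> Dn \<union> Dx \<and> neg_vars \<Phi> \<inter> (Dn \<union> Dx) = {}"
    unfolding \<Phi>_def D_lineage_def by (rule dlin_vars)
  have ce: "causal_effect S Dn Dx \<tau> Q = E_do Dx \<Phi> \<tau> (\<tau> \<in> Dn \<union> Dx) - E_do Dx \<Phi> \<tau> (\<not> (\<tau> \<in> Dn \<union> Dx))"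
    unfolding causal_effect_def \<Phi>_def Let_def ..
  have M: "\<tau> \<in> pvars \<Phi> \<Longrightarrow> pearson P (rv_Q \<Phi>) (rv_X \<tau>) * (std_dev P (rv_Q \<Phi>) / std_dev P (rv_X \<tau>))
     = E_do Dx \<Phi> \<tau> True - E_do Dx \<Phi> \<tau> False"
    unfolding P_def by (rule main_aux[OF endo _ no_mixed])
  show ?thesis
  proof (intro conjI impI)
    assume a: "\<tau> \<in> pos_vars \<Phi>"
    hence t: "(\<tau> \<in> Dn \<union> Dx) = True" using dv0 by blast
    have "\<tau> \<in> pvars \<Phi>" using a unfolding pvars_def by blast
    thus "causal_effect S Dn Dx \<tau> Q = pearson P (rv_Q \<Phi>) (rv_X \<tau>) * (std_dev P (rv_Q \<Phi>) / std_dev P (rv_X \<tau>))"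
      using M ce[unfolded t] by simp
  next
    assume a: "\<tau> \<in> neg_vars \<Phi>"
    hence t: "(\<tau> \<in> Dn \<union> Dx) = False" using dv0 by blast
    have "\<tau> \<in> pvars \<Phi>" using a unfolding pvars_def by blast
    thus "causal_effect S Dn Dx \<tau> Q = - (pearson P (rv_Q \<Phi>) (rv_X \<tau>) * (std_dev P (rv_Q \<Phi>) / std_dev P (rv_X \<tau>)))"
      using M ce[unfolded t] by simp
  qed
qed

end
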